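(* Let $a_n>0$ with $a_n\to0$, and let $x_n=O_p(1)$ be continuous random variables with densities $p_n$ such that (i) $\mathbb E|x_n|\le C$ for some constant $C$ and all $n$; (ii) $1+a_nx_n>0$ almost surely; (iii) $a_n^{-2}\sup_{x\le-1/(2a_n)}p_n(x)\to0$. Then $\mathbb E\ln(1+a_nx_n)=O(a_n)$. *)

theory Defs
  imports "HOL-Probability.Probability" "HOL-Library.Landau_Symbols"
begin

end

theory Submission
  imports Defs
begin

lemma ptw:
  fixes a t :: real
  assumes a: "a > 0" and h: "1 + a * t > 0"
  shows "ennreal \<bar>ln (1 + a * t)\<bar> \<le> ennreal (2 * a * \<bar>t\<bar>) + indicator {-1/a<..<-1/(2*a)} t * ennreal (- ln (1 + a * t))"
proof (cases "a * t \<ge> -1/2")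
  case True
  have "\<bar>ln (1 + a * t)\<bar> \<le> 2 * \<bar>a * t\<bar>"
  proof (cases "a * t \<ge> 0")
    case True
    then show ?thesis using ln_le_minus_one[of "1 + a*t"] by auto
  next
    case False
    have "- ln (1 + a*t) = ln (1 / (1 + a*t))" using h by (simp add: ln_div)
    also have "\<dots> \<le> 1 / (1 + a*t) - 1" using h by (intro ln_le_minus_one) auto
    also have "\<dots> = - (a*t) / (1 + a*t)" using h by (simp add: field_simps)
    also have "\<dots> \<le> - (a*t) / (1/2)" using False True h
      by (intro divide_left_mono) auto
    finally have "- ln (1 + a*t) \<le> 2 * \<bar>a*t\<bar>" using False by simp
    moreover have "ln (1 + a*t) \<le> 0" using False h by simp
    ultimately show ?thesis by simp
  qed
  then have "ennreal \<bar>ln (1 + a * t)\<bar> \<le> ennreal (2 * a * \<bar>t\<bar>)"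
    using a by (simp add: abs_mult)
  then show ?thesis by (rule order_trans) (simp add: add_increasing2)
next
  case False
  have t1: "t < -1/(2*a)" using False a by (simp add: field_simps)
  have t2: "-1/a < t" using h a by (simp add: field_simps)
  have "ln (1 + a*t) \<le> 0" using False h by simp
  then have "ennreal \<bar>ln (1 + a * t)\<bar> = indicator {-1/a<..<-1/(2*a)} t * ennreal (- ln (1 + a * t))"
    using t1 t2 by (simp add: indicator_def)
  then show ?thesis by (simp add: add_increasing)
qed

lemma lnint: "(\<integral>\<^sup>+ v. indicator {0<..<1/2} v * ennreal (- ln v) \<partial>lborel) \<le> 4"
proof -
  have I: "((\<lambda>x. x powr (-1/2::real)) has_integral 2) {0..1}"
    using has_integral_powr_from_0[of "-1/2" 1] by simp
  have eq: "(\<integral>\<^sup>+ v. ennreal (v powr (-1/2)) * indicator {0..1} v \<partial>lborel) = ennreal 2"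
    by (rule nn_integral_has_integral_lebesgue'[OF _ I]) simp
  have "(\<integral>\<^sup>+ v. indicator {0<..<1/2} v * ennreal (- ln v) \<partial>lborel)
      \<le> (\<integral>\<^sup>+ v. 2 * (ennreal (v powr (-1/2)) * indicator {0..1} v) \<partial>lborel)"
  proof (rule nn_integral_mono)
    fix v :: real
    show "indicator {0<..<1/2} v * ennreal (- ln v) \<le> 2 * (ennreal (v powr (-1/2)) * indicator {0..1} v)"
    proof (cases "0 < v \<and> v < 1/2")
      case True
      define y where "y = v powr (-1/2)"
      have "v powr (1/2) \<le> 1 powr (1/2)" using True by (intro powr_mono2) auto
      moreover have "v powr (1/2) > 0" using True by simp
      ultimately have y1: "y \<ge> 1" using True unfolding y_def
        by (simp add: powr_minus_divide)
      have "ln y = -1/2 * ln v" using True unfolding y_def by (simp add: ln_powr)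
      then have "- ln v = 2 * ln y" by simp
      also have "\<dots> \<le> 2 * (y - 1)" using ln_le_minus_one[of y] y1 by simp
      also have "\<dots> \<le> 2 * y" by simp
      finally have "- ln v \<le> 2 * y" .
      then have "ennreal (- ln v) \<le> 2 * ennreal y"
      proof -
        have "ennreal (- ln v) \<le> ennreal (2 * y)" using \<open>- ln v \<le> 2 * y\<close> by (rule ennreal_leI)
        also have "\<dots> = 2 * ennreal y" using y1 by (simp add: ennreal_mult)
        finally show ?thesis .
      qed
      then show ?thesis using True by (simp add: indicator_def y_def)
    qed (auto simp: indicator_def)
  qed
  also have "\<dots> = 2 * ennreal 2"
    using eq by (subst nn_integral_cmult) auto
  also have "\<dots> = 4" by (simp flip: ennreal_numeral ennreal_mult)
  finally show ?thesis .
qed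

lemma gint:
  fixes a :: real assumes a: "a > 0"
  shows "(\<integral>\<^sup>+ t. indicator {-1/a<..<-1/(2*a)} t * ennreal (- ln (1 + a * t)) \<partial>lborel) \<le> ennreal (4/a)"
proof -
  have "(\<integral>\<^sup>+ t. indicator {-1/a<..<-1/(2*a)} t * ennreal (- ln (1 + a * t)) \<partial>lborel)
     = ennreal \<bar>1/a\<bar> * (\<integral>\<^sup>+ v. indicator {-1/a<..<-1/(2*a)} (-1/a + (1/a) * v) * ennreal (- ln (1 + a * (-1/a + (1/a) * v))) \<partial>lborel)"
    using a by (intro nn_integral_real_affine) auto
  also have "(\<integral>\<^sup>+ v. indicator {-1/a<..<-1/(2*a)} (-1/a + (1/a) * v) * ennreal (- ln (1 + a * (-1/a + (1/a) * v))) \<partial>lborel)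
     = (\<integral>\<^sup>+ v. indicator {0<..<1/2} v * ennreal (- ln v) \<partial>lborel)"
  proof (rule nn_integral_cong)
    fix v :: real
    have e1: "1 + a * (-1/a + (1/a) * v) = v" using a by (simp add: field_simps)
    have e2: "(-1/a + (1/a) * v \<in> {-1/a<..<-1/(2*a)}) = (v \<in> {0<..<1/2})"
      using a by (auto simp: field_simps)
    show "indicator {-1/a<..<-1/(2*a)} (-1/a + (1/a) * v) * ennreal (- ln (1 + a * (-1/a + (1/a) * v)))
       = indicator {0<..<1/2} v * ennreal (- ln v)"
      unfolding e1 using e2 by (simp add: indicator_def)
  qed
  also have "ennreal \<bar>1/a\<bar> * \<dots> \<le> ennreal (1/a) * 4"
    using a lnint by (simp add: mult_left_mono)
  also have "\<dots> = ennreal (1/a) * ennreal 4" by simp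
  also have "\<dots> = ennreal (4/a)" using a by (subst ennreal_mult[symmetric]) auto
  finally show ?thesis .
qed

lemma bound1:
  fixes M :: "'a measure" and X :: "'a \<Rightarrow> real" and p :: "real \<Rightarrow> ennreal" and a :: real
  assumes a: "a > 0" and D: "distributed M lborel X p"
    and pos: "AE \<omega> in M. 1 + a * X \<omega> > 0"
  shows "(\<integral>\<^sup>+\<omega>. ennreal \<bar>ln (1 + a * X \<omega>)\<bar> \<partial>M)
     \<le> ennreal (2*a) * (\<integral>\<^sup>+\<omega>. ennreal \<bar>X \<omega>\<bar> \<partial>M) + (SUP t\<in>{..-1/(2*a)}. p t) * ennreal (4/a)"
proof -
  define g where "g t = indicator {-1/a<..<-1/(2*a)} t * ennreal (- ln (1 + a * t))" for t :: real
  define S where "S = (SUP t\<in>{..-1/(2*a)}. p t)"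
  have Xm[measurable]: "X \<in> borel_measurable M" using distributed_measurable[OF D] by simp
  have pm[measurable]: "p \<in> borel_measurable borel" using distributed_borel_measurable[OF D] by simp
  have gm[measurable]: "g \<in> borel_measurable borel" unfolding g_def by measurable
  have "(\<integral>\<^sup>+\<omega>. ennreal \<bar>ln (1 + a * X \<omega>)\<bar> \<partial>M)
     \<le> (\<integral>\<^sup>+\<omega>. ennreal (2 * a * \<bar>X \<omega>\<bar>) + g (X \<omega>) \<partial>M)"
  proof (rule nn_integral_mono_AE)
    show "AE \<omega> in M. ennreal \<bar>ln (1 + a * X \<omega>)\<bar> \<le> ennreal (2 * a * \<bar>X \<omega>\<bar>) + g (X \<omega>)"
      using pos by eventually_elim (unfold g_def, rule ptw[OF a])
  qed
  also have "\<dots> = (\<integral>\<^sup>+\<omega>. ennreal (2 * a * \<bar>X \<omega>\<bar>) \<partial>M) + (\<integral>\<^sup>+\<omega>. g (X \<omega>) \<partial>M)"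
    by (intro nn_integral_add) auto
  also have "(\<integral>\<^sup>+\<omega>. ennreal (2 * a * \<bar>X \<omega>\<bar>) \<partial>M) = ennreal (2*a) * (\<integral>\<^sup>+\<omega>. ennreal \<bar>X \<omega>\<bar> \<partial>M)"
    using a by (subst nn_integral_cmult[symmetric]) (auto simp: ennreal_mult)
  also have "(\<integral>\<^sup>+\<omega>. g (X \<omega>) \<partial>M) = (\<integral>\<^sup>+t. g t \<partial>distr M lborel X)"
    by (subst nn_integral_distr) auto
  also have "\<dots> = (\<integral>\<^sup>+t. p t * g t \<partial>lborel)"
    unfolding distributed_distr_eq_density[OF D] by (subst nn_integral_density) auto
  also have "\<dots> \<le> (\<integral>\<^sup>+t. S * g t \<partial>lborel)"
  proof (rule nn_integral_mono)
    fix t :: real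
    show "p t * g t \<le> S * g t"
    proof (cases "t \<in> {-1/a<..<-1/(2*a)}")
      case True
      then have "p t \<le> S" unfolding S_def by (intro SUP_upper) auto
      then show ?thesis by (intro mult_right_mono) auto
    qed (simp add: g_def)
  qed
  also have "\<dots> = S * (\<integral>\<^sup>+t. g t \<partial>lborel)" by (subst nn_integral_cmult) auto
  also have "\<dots> \<le> S * ennreal (4/a)" unfolding g_def using gint[OF a] by (intro mult_left_mono) auto
  finally show ?thesis unfolding S_def by (simp add: add_mono)
qed

theorem lemma3:
  fixes M :: "nat \<Rightarrow> 'a measure"
    and x :: "nat \<Rightarrow> 'a \<Rightarrow> real"
    and p :: "nat \<Rightarrow> real \<Rightarrow> ennreal"
    and a :: "nat \<Rightarrow> real"
    and C :: real
  assumes prob: "\<And>n. prob_space (M n)"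
    and a_pos: "\<And>n. a n > 0"
    and a_lim: "a \<longlonglongrightarrow> 0"
    and dens: "\<And>n. distributed (M n) lborel (x n) (p n)"
    and Op1: "\<And>e. e > 0 \<Longrightarrow> \<exists>K. \<forall>n. measure (M n) {\<omega> \<in> space (M n). \<bar>x n \<omega>\<bar> > K} < e"
    and mom: "\<And>n. (\<integral>\<^sup>+ \<omega>. ennreal \<bar>x n \<omega>\<bar> \<partial>M n) \<le> ennreal C"
    and pos: "\<And>n. AE \<omega> in M n. 1 + a n * x n \<omega> > 0"
    and tail: "(\<lambda>n. ennreal (1 / (a n)\<^sup>2) * (SUP t \<in> {..- 1 / (2 * a n)}. p n t)) \<longlonglongrightarrow> 0"
  shows "(\<forall>\<^sub>F n in sequentially. integrable (M n) (\<lambda>\<omega>. ln (1 + a n * x n \<omega>)))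
    \<and> (\<lambda>n. \<integral>\<omega>. ln (1 + a n * x n \<omega>) \<partial>M n) \<in> O(a)"
proof -
  define C' where "C' = max C 0"
  define K where "K = 2 * C' + 4"
  define S where "S n = (SUP t \<in> {..- 1 / (2 * a n)}. p n t)" for n
  have ev: "\<forall>\<^sub>F n in sequentially. ennreal (1 / (a n)\<^sup>2) * S n < 1"
    using order_tendstoD(2)[OF tail, of 1] unfolding S_def by simp
  have B: "\<forall>\<^sub>F n in sequentially. (\<integral>\<^sup>+\<omega>. ennreal (norm (ln (1 + a n * x n \<omega>))) \<partial>M n) \<le> ennreal (K * a n)"
    using ev
  proof eventually_elim
    case (elim n)
    have an: "a n > 0" by (rule a_pos)
    have one: "ennreal ((a n)\<^sup>2) * ennreal (1 / (a n)\<^sup>2) = 1"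
      using an by (subst ennreal_mult[symmetric]) auto
    have "S n = ennreal ((a n)\<^sup>2) * (ennreal (1 / (a n)\<^sup>2) * S n)"
      by (simp add: mult.assoc[symmetric] one)
    also have "\<dots> \<le> ennreal ((a n)\<^sup>2) * 1" using elim by (intro mult_left_mono) auto
    finally have Sle: "S n \<le> ennreal ((a n)\<^sup>2)" by simp
    have "(\<integral>\<^sup>+\<omega>. ennreal (norm (ln (1 + a n * x n \<omega>))) \<partial>M n)
       \<le> ennreal (2 * a n) * (\<integral>\<^sup>+\<omega>. ennreal \<bar>x n \<omega>\<bar> \<partial>M n) + S n * ennreal (4 / a n)"
      using bound1[OF an dens pos] unfolding S_def by simp
    also have "\<dots> \<le> ennreal (2 * a n) * ennreal C' + ennreal ((a n)\<^sup>2) * ennreal (4 / a n)"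
    proof (intro add_mono mult_left_mono mult_right_mono Sle)
      show "(\<integral>\<^sup>+\<omega>. ennreal \<bar>x n \<omega>\<bar> \<partial>M n) \<le> ennreal C'"
        using mom[of n] unfolding C'_def by (rule order_trans) (simp add: ennreal_leI)
    qed auto
    also have "\<dots> = ennreal (2 * a n * C' + (a n)\<^sup>2 * (4 / a n))"
    proof -
      have c0: "C' \<ge> 0" by (simp add: C'_def)
      have "ennreal (2 * a n) * ennreal C' = ennreal (2 * a n * C')"
        using an c0 by (intro ennreal_mult[symmetric]) auto
      moreover have "ennreal ((a n)\<^sup>2) * ennreal (4 / a n) = ennreal ((a n)\<^sup>2 * (4 / a n))"
        using an by (intro ennreal_mult[symmetric]) auto
      moreover have "ennreal (2 * a n * C') + ennreal ((a n)\<^sup>2 * (4 / a n)) = ennreal (2 * a n * C' + (a n)\<^sup>2 * (4 / a n))"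
        using an c0 by (intro ennreal_plus[symmetric]) auto
      ultimately show ?thesis by simp
    qed
    also have "2 * a n * C' + (a n)\<^sup>2 * (4 / a n) = K * a n"
      using an by (simp add: K_def power2_eq_square field_simps)
    finally show ?case .
  qed
  have I: "\<forall>\<^sub>F n in sequentially. integrable (M n) (\<lambda>\<omega>. ln (1 + a n * x n \<omega>))"
    using B
  proof eventually_elim
    case (elim n)
    have [measurable]: "x n \<in> borel_measurable (M n)" using distributed_measurable[OF dens[of n]] by simp
    show ?case
      by (rule integrableI_bounded) (use elim in \<open>auto simp: top_unique intro: le_less_trans\<close>)
  qed
  have "\<forall>\<^sub>F n in sequentially. norm (\<integral>\<omega>. ln (1 + a n * x n \<omega>) \<partial>M n) \<le> K * norm (a n)"
    using I B
  proof eventually_elim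
    case (elim n)
    have "ennreal (norm (\<integral>\<omega>. ln (1 + a n * x n \<omega>) \<partial>M n)) \<le> ennreal (K * a n)"
      using integral_norm_bound_ennreal[OF elim(1)] elim(2) by (rule order_trans)
    moreover have "K * a n \<ge> 0" using a_pos[of n] by (simp add: K_def C'_def)
    ultimately show ?case using a_pos[of n] by (simp add: ennreal_le_iff)
  qed
  then have "(\<lambda>n. \<integral>\<omega>. ln (1 + a n * x n \<omega>) \<partial>M n) \<in> O(a)" by (rule bigoI)
  with I show ?thesis by blast
qed

end
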